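(* If $G$ is a nice connected graph of order $n$, maximum degree $\Delta$ and chromatic number $k$, then ${\rm ML}^{\rm W}(G) \leq 2k(n-1)+2\Delta$.
   Context: All graphs are finite and simple. A walk of a graph $G$ is a sequence of vertices $u_0u_1\dots u_p$ with $u_tu_{t+1}\in E(G)$ for all $t$ (vertices and edges may repeat); its length is $p$. For a walk $W$ of $G$, $G+W$ is the multigraph on $V(G)$ whose edge multiset consists of $E(G)$ together with each edge added as many times as $W$ traverses it. A multigraph is locally irregular if no two adjacent vertices have the same degree; a walk is irregularising if $G+W$ is locally irregular. A graph is nice if it is connected and not isomorphic to $K_2$. ${\rm ML}^{\rm W}(G)$ denotes the minimum length of an irregularising walk of $G$ (a walk of length $0$ is allowed). *)

theory Defs
  imports Main
begin

definition simple_graph :: "'a set \<Rightarrow> ('a \<Rightarrow> 'a \<Rightarrow> bool) \<Rightarrow> bool" where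
  "simple_graph V E \<longleftrightarrow> finite V \<and> (\<forall>u v. E u v \<longrightarrow> E v u)
     \<and> (\<forall>v. \<not> E v v) \<and> (\<forall>u v. E u v \<longrightarrow> u \<in> V \<and> v \<in> V)"

definition connected_graph :: "'a set \<Rightarrow> ('a \<Rightarrow> 'a \<Rightarrow> bool) \<Rightarrow> bool" where
  "connected_graph V E \<longleftrightarrow> V \<noteq> {} \<and> (\<forall>u\<in>V. \<forall>v\<in>V. E\<^sup>*\<^sup>* u v)"

definition is_K2 :: "'a set \<Rightarrow> ('a \<Rightarrow> 'a \<Rightarrow> bool) \<Rightarrow> bool" where
  "is_K2 V E \<longleftrightarrow> (\<exists>u v. u \<noteq> v \<and> V = {u, v} \<and> E u v)"

definition nice :: "'a set \<Rightarrow> ('a \<Rightarrow> 'a \<Rightarrow> bool) \<Rightarrow> bool" where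
  "nice V E \<longleftrightarrow> connected_graph V E \<and> \<not> is_K2 V E"

definition deg :: "'a set \<Rightarrow> ('a \<Rightarrow> 'a \<Rightarrow> bool) \<Rightarrow> 'a \<Rightarrow> nat" where
  "deg V E v = card {u \<in> V. E v u}"

definition max_degree :: "'a set \<Rightarrow> ('a \<Rightarrow> 'a \<Rightarrow> bool) \<Rightarrow> nat" where
  "max_degree V E = Max (deg V E ` V)"

definition chromatic_number :: "'a set \<Rightarrow> ('a \<Rightarrow> 'a \<Rightarrow> bool) \<Rightarrow> nat" where
  "chromatic_number V E =
     (LEAST k. \<exists>c :: 'a \<Rightarrow> nat. (\<forall>v\<in>V. c v < k) \<and> (\<forall>u v. E u v \<longrightarrow> c u \<noteq> c v))"

definition is_walk :: "'a set \<Rightarrow> ('a \<Rightarrow> 'a \<Rightarrow> bool) \<Rightarrow> 'a list \<Rightarrow> bool" where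
  "is_walk V E w \<longleftrightarrow> w \<noteq> [] \<and> set w \<subseteq> V \<and>
     (\<forall>i. Suc i < length w \<longrightarrow> E (w ! i) (w ! Suc i))"

definition walk_length :: "'a list \<Rightarrow> nat" where
  "walk_length w = length w - 1"

text \<open>Number of traversals by w of edges incident with v (edges are non-loops).\<close>
definition traversals :: "'a list \<Rightarrow> 'a \<Rightarrow> nat" where
  "traversals w v = card {i. Suc i < length w \<and> (w ! i = v \<or> w ! Suc i = v)}"

text \<open>Degree of v in the multigraph G+W.\<close>
definition deg_plus_walk :: "'a set \<Rightarrow> ('a \<Rightarrow> 'a \<Rightarrow> bool) \<Rightarrow> 'a list \<Rightarrow> 'a \<Rightarrow> nat" where
  "deg_plus_walk V E w v = deg V E v + traversals w v"

text \<open>G+W has the same adjacency as G (walk edges are edges of G).\<close>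
definition irregularising_walk :: "'a set \<Rightarrow> ('a \<Rightarrow> 'a \<Rightarrow> bool) \<Rightarrow> 'a list \<Rightarrow> bool" where
  "irregularising_walk V E w \<longleftrightarrow> is_walk V E w \<and>
     (\<forall>u v. E u v \<longrightarrow> deg_plus_walk V E w u \<noteq> deg_plus_walk V E w v)"

definition min_irreg_walk_length :: "'a set \<Rightarrow> ('a \<Rightarrow> 'a \<Rightarrow> bool) \<Rightarrow> nat" where
  "min_irreg_walk_length V E = (LEAST l. \<exists>w. irregularising_walk V E w \<and> walk_length w = l)"

end

theory Submission
  imports Defs
begin

lemma trav_nil[simp]: "traversals [] v = 0"
  by (simp add: traversals_def)

lemma trav_single[simp]: "traversals [a] v = 0"
  by (simp add: traversals_def)

lemma trav_cons2[simp]: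
  "traversals (a # b # zs) v = (if a = v \<or> b = v then 1 else 0) + traversals (b # zs) v"
proof -
  let ?P = "\<lambda>w i. Suc i < length w \<and> (w ! i = v \<or> w ! Suc i = v)"
  have eq: "{i. ?P (a # b # zs) i} = (if a = v \<or> b = v then {0} else {}) \<union> Suc ` {i. ?P (b # zs) i}"
    apply (auto simp: image_iff split: if_splits)
    apply (case_tac x; auto)+
    done
  have fin: "finite {i. ?P (b # zs) i}" by (rule finite_subset[of _ "{..<length (b#zs)}"]) auto
  have "card {i. ?P (a # b # zs) i} = (if a = v \<or> b = v then 1 else 0) + card {i. ?P (b # zs) i}"
    unfolding eq using fin by (simp add: card_image)
  then show ?thesis unfolding traversals_def by simp
qed

lemma trav_notin: "x \<notin> set w \<Longrightarrow> traversals w x = 0"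
  by (induction w rule: induct_list012) auto

lemma trav_glue: "traversals (xs @ u # zs) v = traversals (xs @ [u]) v + traversals (u # zs) v"
proof (induction xs rule: induct_list012)
  case (3 a b xs)
  then show ?case by simp
next
  case (2 a)
  then show ?case by (cases zs) auto
qed simp

lemma trav_append: "xs \<noteq> [] \<Longrightarrow> ys \<noteq> [] \<Longrightarrow> last xs = hd ys \<Longrightarrow>
   traversals (xs @ tl ys) v = traversals xs v + traversals ys v"
proof -
  assume a: "xs \<noteq> []" "ys \<noteq> []" "last xs = hd ys"
  define xs' where "xs' = butlast xs"
  have xs: "xs = xs' @ [last xs]" using a(1) by (simp add: xs'_def)
  have ys: "ys = last xs # tl ys" using a(2,3) by simp
  have "traversals (xs' @ last xs # tl ys) v = traversals (xs' @ [last xs]) v + traversals (last xs # tl ys) v"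
    by (rule trav_glue)
  moreover have "xs @ tl ys = xs' @ last xs # tl ys" by (subst xs) simp
  ultimately show ?thesis using xs ys by simp
qed

lemma rep_rot: "u # concat (replicate a [v, u]) = concat (replicate a [u, v]) @ [u]"
  by (induction a) auto

lemma trav_rep: "u \<noteq> v \<Longrightarrow> traversals (u # concat (replicate a [v, u])) x = 2 * a * (if x = u \<or> x = v then 1 else 0)"
proof (induction a)
  case (Suc a)
  have "u # concat (replicate (Suc a) [v, u]) = u # v # (u # concat (replicate a [v, u]))" by simp
  then show ?case using Suc by (simp only:) auto
qed simp

lemma trav_insert: "u \<noteq> v \<Longrightarrow>
  traversals (xs @ u # concat (replicate a [v, u]) @ ys) x = traversals (xs @ u # ys) x + 2 * a * (if x = u \<or> x = v then 1 else 0)"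
proof -
  assume uv: "u \<noteq> v"
  let ?C = "concat (replicate a [v, u])" and ?C' = "concat (replicate a [u, v])"
  have r: "u # ?C = ?C' @ [u]" by (rule rep_rot)
  have e: "xs @ u # ?C @ ys = (xs @ ?C') @ u # ys" using r
    by (metis append.assoc append_Cons append_Nil)
  have 1: "traversals (xs @ u # ?C @ ys) x = traversals ((xs @ ?C') @ u # ys) x"
    by (simp only: e)
  have 2: "traversals ((xs @ ?C') @ u # ys) x = traversals ((xs @ ?C') @ [u]) x + traversals (u # ys) x"
    by (rule trav_glue)
  have 3: "(xs @ ?C') @ [u] = xs @ u # ?C" using r by simp
  have 4: "traversals (xs @ u # ?C) x = traversals (xs @ [u]) x + traversals (u # ?C) x"
    by (rule trav_glue)
  have 5: "traversals (u # ?C) x = 2 * a * (if x = u \<or> x = v then 1 else 0)"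
    using trav_rep[OF uv, of a x] by simp
  have 6: "traversals (xs @ u # ys) x = traversals (xs @ [u]) x + traversals (u # ys) x"
    by (rule trav_glue)
  show ?thesis by (simp only: 1 2 3 4 5 6)
qed

lemma succ_insert:
  assumes "successively P (xs @ u # ys)" "P u v" "P v u"
  shows "successively P (xs @ u # concat (replicate a [v, u]) @ ys)"
proof -
  let ?C = "concat (replicate a [v, u])"
  have d: "successively P (u # ?C)"
    using assms(2,3) by (induction a) (auto simp: successively_Cons)
  have l: "last (u # ?C) = u" using rep_rot[of u a v] by simp
  have s1: "successively P xs" "xs \<noteq> [] \<longrightarrow> P (last xs) u" "successively P (u # ys)"
    using assms(1) by (auto simp: successively_append_iff)
  have "successively P ys" "ys \<noteq> [] \<longrightarrow> P u (hd ys)" using s1(3)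
    by (cases ys; auto)+
  then have s2: "successively P ((u # ?C) @ ys)" using d l
    by (subst successively_append_iff) auto
  have "xs @ u # ?C @ ys = xs @ ((u # ?C) @ ys)" by simp
  then show ?thesis using s1 s2
    by (simp only:) (subst successively_append_iff, auto)
qed

inductive_set grown :: "('a \<Rightarrow> 'a \<Rightarrow> bool) \<Rightarrow> 'a \<Rightarrow> 'a set set" for E r where
  base: "{r} \<in> grown E r"
| step: "S \<in> grown E r \<Longrightarrow> u \<in> S \<Longrightarrow> E u v \<Longrightarrow> v \<notin> S \<Longrightarrow> insert v S \<in> grown E r"

lemma grown_fin: "S \<in> grown E r \<Longrightarrow> finite S \<and> r \<in> S"
  by (induction rule: grown.induct) auto

lemma FL:
  assumes "S \<in> grown E r" "0 < k" and sym: "\<And>x y. E x y \<Longrightarrow> E y x"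
  shows "\<exists>\<sigma>::'a\<Rightarrow>bool. \<forall>g::'a\<Rightarrow>nat. \<exists>w. w \<noteq> [] \<and> hd w = r \<and> last w = r \<and> set w = S \<and> successively E w
     \<and> successively (\<lambda>a b. \<sigma> a \<noteq> \<sigma> b) w \<and> length w \<le> 2*k*(card S - 1) + 1
     \<and> (\<forall>v\<in>S. v \<noteq> r \<longrightarrow> traversals w v mod (2*k) = 2*(g v mod k))"
  using assms(1)
proof (induction rule: grown.induct)
  case base
  show ?case
    apply (rule exI[of _ "\<lambda>_::'a. True"])
    apply (intro allI)
    apply (rule exI[of _ "[r]"])
    by auto
next
  case (step S u v)
  from step.IH obtain \<sigma> :: "'a \<Rightarrow> bool" where IH: "\<forall>g::'a\<Rightarrow>nat. \<exists>w. w \<noteq> [] \<and> hd w = r \<and> last w = r \<and> set w = S \<and> successively E w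
     \<and> successively (\<lambda>a b. \<sigma> a \<noteq> \<sigma> b) w \<and> length w \<le> 2*k*(card S - 1) + 1
     \<and> (\<forall>v\<in>S. v \<noteq> r \<longrightarrow> traversals w v mod (2*k) = 2*(g v mod k))" by (elim exE)
  have finS: "finite S" "r \<in> S" using grown_fin[OF step.hyps(1)] by auto
  have uv: "u \<noteq> v" using step.hyps by auto
  define \<sigma>' where "\<sigma>' = \<sigma>(v := \<not> \<sigma> u)"
  show ?case
  proof (rule exI[of _ \<sigma>'], intro allI)
    fix g :: "'a \<Rightarrow> nat"
    define a where "a = (if g v mod k = 0 then k else g v mod k)"
    have a1: "1 \<le> a" "a \<le> k" using assms(2) by (auto simp: a_def)
    have a2: "(2 * a) mod (2*k) = 2 * (g v mod k)"
      using assms(2) by (auto simp: a_def)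
    define g' where "g' = g(u := g u + k - a)"
    obtain w where w: "w \<noteq> []" "hd w = r" "last w = r" "set w = S" "successively E w"
      "successively (\<lambda>a b. \<sigma> a \<noteq> \<sigma> b) w" "length w \<le> 2*k*(card S - 1) + 1"
      "\<forall>x\<in>S. x \<noteq> r \<longrightarrow> traversals w x mod (2*k) = 2*(g' x mod k)"
      using IH by blast
    obtain xs ys where wsplit: "w = xs @ u # ys" using w(4) step.hyps(2) by (metis split_list)
    define w' where "w' = xs @ u # concat (replicate a [v, u]) @ ys"
    have tr: "traversals w' x = traversals w x + 2 * a * (if x = u \<or> x = v then 1 else 0)" for x
      unfolding w'_def wsplit by (rule trav_insert[OF uv])
    have lastrep: "last (u # concat (replicate a [v, u])) = u" using rep_rot[of u a v] by simp
    have "w' \<noteq> []" by (simp add: w'_def)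
    moreover have "hd w' = r" using w(2) by (cases xs) (auto simp: w'_def wsplit)
    moreover have "last w' = r"
    proof (cases "ys = []")
      case True
      then show ?thesis using w(3) lastrep by (simp add: w'_def wsplit)
    next
      case False
      then show ?thesis using w(3) by (simp add: w'_def wsplit)
    qed
    moreover have "set w' = insert v S"
    proof -
      have "set (concat (replicate a [v, u])) = {v, u}" using a1 by (cases a) auto
      then show ?thesis using w(4) by (auto simp: w'_def wsplit)
    qed
    moreover have "successively E w'"
      unfolding w'_def using succ_insert[of E xs u ys v a] w(5) wsplit step.hyps(3) sym[OF step.hyps(3)] by auto
    moreover have "successively (\<lambda>a b. \<sigma>' a \<noteq> \<sigma>' b) w'"
    proof -
      have "successively (\<lambda>a b. \<sigma>' a \<noteq> \<sigma>' b) w"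
      proof -
        have "\<forall>x\<in>set w. \<sigma>' x = \<sigma> x" using w(4) step.hyps(4) by (auto simp: \<sigma>'_def)
        then show ?thesis using w(6) by (auto simp: successively_conv_nth)
      qed
      moreover have "\<sigma>' u \<noteq> \<sigma>' v" "\<sigma>' v \<noteq> \<sigma>' u" using uv by (auto simp: \<sigma>'_def)
      ultimately show ?thesis unfolding w'_def wsplit by (intro succ_insert) auto
    qed
    moreover have "length w' \<le> 2*k*(card (insert v S) - 1) + 1"
    proof -
      have "card (insert v S) = Suc (card S)" using finS step.hyps(4) by simp
      moreover have "card S \<ge> 1" using finS by (auto simp: Suc_le_eq card_gt_0_iff)
      have "length (concat (replicate a [v, u])) = 2 * a" by (induction a) auto
      moreover have "length w' = length w + 2 * a" using calculation by (simp add: w'_def wsplit)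
      moreover have "2*k*(card S - 1) + 2*k = 2*k*card S" using \<open>card S \<ge> 1\<close>
        by (cases "card S") (auto simp: algebra_simps)
      moreover have "2 * a \<le> 2 * k" using a1 by simp
      ultimately show ?thesis using w(7) by simp
    qed
    moreover have "\<forall>x\<in>insert v S. x \<noteq> r \<longrightarrow> traversals w' x mod (2*k) = 2*(g x mod k)"
    proof (intro ballI impI)
      fix x assume x: "x \<in> insert v S" "x \<noteq> r"
      show "traversals w' x mod (2*k) = 2*(g x mod k)"
      proof (cases "x = v")
        case True
        have "traversals w v = 0" using w(4) step.hyps(4) by (intro trav_notin) auto
        then show ?thesis using True tr[of v] a2 by simp
      next
        case False
        then have xS: "x \<in> S" using x by auto
        show ?thesis
        proof (cases "x = u")
          case True
          have h: "traversals w u mod (2*k) = 2*((g u + k - a) mod k)"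
            using w(8) xS True x(2) by (auto simp: g'_def)
          have "traversals w' u = traversals w u + 2 * a" using tr[of u] by simp
          then have "traversals w' u mod (2*k) = (traversals w u mod (2*k) + 2 * a) mod (2*k)"
            by (simp add: mod_add_left_eq)
          also have "\<dots> = (2*((g u + k - a) mod k) + 2 * a) mod (2*k)" using h by simp
          also have "\<dots> = (2*(g u + k - a) + 2 * a) mod (2*k)"
            by (metis mod_add_left_eq mult_mod_right)
          also have "2*(g u + k - a) + 2 * a = 2 * g u + 2 * k" using a1 by simp
          also have "(2 * g u + 2 * k) mod (2*k) = 2 * (g u mod k)" by (simp only: mod_add_self2 mult_mod_right)
          finally show ?thesis using True by simp
        next
          case False
          then show ?thesis using tr[of x] w(8) xS x(2) \<open>x \<noteq> v\<close> by (simp add: g'_def)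
        qed
      qed
    qed
    ultimately show "\<exists>w. w \<noteq> [] \<and> hd w = r \<and> last w = r \<and> set w = insert v S \<and> successively E w
     \<and> successively (\<lambda>a b. \<sigma>' a \<noteq> \<sigma>' b) w \<and> length w \<le> 2*k*(card (insert v S) - 1) + 1
     \<and> (\<forall>x\<in>insert v S. x \<noteq> r \<longrightarrow> traversals w x mod (2*k) = 2*(g x mod k))" by blast
  qed
qed

lemma alt_sum:
  assumes "finite V" "set w \<subseteq> V" "successively (\<lambda>a b. \<sigma> a \<noteq> \<sigma> b) w"
  shows "(\<Sum>v\<in>V. (if \<sigma> v then 1 else -1) * int (traversals w v)) = (0::int)"
  using assms(2,3)
proof (induction w rule: induct_list012)
  case (3 a b zs)
  let ?\<chi> = "\<lambda>v. (if \<sigma> v then 1 else -1::int)"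
  have ab: "a \<in> V" "b \<in> V" "\<sigma> a \<noteq> \<sigma> b" using 3 by auto
  then have anb: "a \<noteq> b" by auto
  have IH: "(\<Sum>v\<in>V. ?\<chi> v * int (traversals (b # zs) v)) = 0" using 3 by auto
  have "(\<Sum>v\<in>V. ?\<chi> v * int (if a = v \<or> b = v then 1 else 0)) = (\<Sum>v\<in>{a,b}. ?\<chi> v * int (if a = v \<or> b = v then 1 else 0))"
    using ab assms(1) by (intro sum.mono_neutral_right) auto
  also have "\<dots> = ?\<chi> a + ?\<chi> b" using anb by simp
  also have "\<dots> = 0" using ab(3) by auto
  finally have "(\<Sum>v\<in>V. ?\<chi> v * int (if a = v \<or> b = v then 1 else 0)) = 0" .
  then show ?case using IH by (simp add: distrib_left sum.distrib)
qed simp_all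

lemma boundary:
  assumes "E\<^sup>*\<^sup>* a z" "a \<in> S" "z \<notin> S"
  shows "\<exists>u v. u \<in> S \<and> v \<notin> S \<and> E u v"
  using assms by (induction rule: rtranclp_induct) auto

lemma conn_grown:
  assumes fin: "finite V" and r: "r \<in> V" and conn: "\<forall>v\<in>V. E\<^sup>*\<^sup>* r v"
    and inV: "\<And>u v. E u v \<Longrightarrow> u \<in> V \<and> v \<in> V"
  shows "V \<in> grown E r"
proof -
  have "\<forall>S. S \<in> grown E r \<longrightarrow> S \<subseteq> V \<longrightarrow> card (V - S) = n \<longrightarrow> V \<in> grown E r" for n
  proof (induction n)
    case 0
    show ?case
    proof (intro allI impI)
      fix S assume S: "S \<in> grown E r" "S \<subseteq> V" "card (V - S) = 0"
      then have "V = S" using fin by auto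
      then show "V \<in> grown E r" using S by simp
    qed
  next
    case (Suc n)
    show ?case
    proof (intro allI impI)
      fix S assume S: "S \<in> grown E r" "S \<subseteq> V" "card (V - S) = Suc n"
      have "V - S \<noteq> {}" using S(3) by (metis card.empty nat.simps(3))
      then obtain z where z: "z \<in> V" "z \<notin> S" by blast
      have "r \<in> S" using grown_fin[OF S(1)] by simp
      then obtain u v where uv: "u \<in> S" "v \<notin> S" "E u v" using boundary[of E r z S] conn z by blast
      have vV: "v \<in> V" using inV[OF uv(3)] by simp
      have S': "insert v S \<in> grown E r" using grown.step[OF S(1) uv(1) uv(3) uv(2)] .
      have "V - insert v S = (V - S) - {v}" by auto
      then have "card (V - insert v S) = n" using S(3) vV uv(2) fin by simp
      then show "V \<in> grown E r" using Suc.IH S' S(2) vV by auto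
    qed
  qed
  moreover have "{r} \<in> grown E r" by (rule grown.base)
  ultimately show ?thesis using r by blast
qed

lemma greedy:
  assumes fin: "finite V" and degD: "\<forall>v\<in>V. deg V E v \<le> D"
    and sym: "\<And>u v. E u v \<Longrightarrow> E v u" and irr: "\<And>v. \<not> E v v"
    and inV: "\<And>u v. E u v \<Longrightarrow> u \<in> V \<and> v \<in> V"
  shows "\<exists>c::'a\<Rightarrow>nat. (\<forall>v\<in>V. c v < D + 1) \<and> (\<forall>u v. E u v \<longrightarrow> c u \<noteq> c v)"
proof -
  have "F \<subseteq> V \<Longrightarrow> \<exists>c::'a\<Rightarrow>nat. (\<forall>v\<in>F. c v \<le> D) \<and> (\<forall>u\<in>F. \<forall>v\<in>F. E u v \<longrightarrow> c u \<noteq> c v)" for F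
  proof (induction F rule: infinite_finite_induct)
    case (infinite A)
    then show ?case using fin finite_subset by blast
  next
    case empty
    then show ?case by auto
  next
    case (insert x F)
    then obtain c :: "'a \<Rightarrow> nat" where c: "\<forall>v\<in>F. c v \<le> D" "\<forall>u\<in>F. \<forall>v\<in>F. E u v \<longrightarrow> c u \<noteq> c v" by auto
    let ?used = "c ` ({u\<in>V. E x u} \<inter> F)"
    have "card ?used \<le> card ({u\<in>V. E x u} \<inter> F)" by (rule card_image_le) (use fin in auto)
    also have "\<dots> \<le> card {u\<in>V. E x u}" by (rule card_mono) (use fin in auto)
    also have "\<dots> \<le> D" using degD insert.prems by (auto simp: deg_def)
    finally have "card ?used < card {0..D}" by simp
    have "\<not> ({0..D} \<subseteq> ?used)"
    proof
      assume "{0..D} \<subseteq> ?used"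
      then have "card {0..D} \<le> card ?used" by (rule card_mono[rotated]) (use fin in auto)
      then show False using \<open>card ?used < card {0..D}\<close> by simp
    qed
    then obtain col where col: "col \<in> {0..D}" "col \<notin> ?used" by blast
    define c' where "c' = c(x := col)"
    have "\<forall>v\<in>insert x F. c' v \<le> D" using c col by (auto simp: c'_def)
    moreover have "\<forall>u\<in>insert x F. \<forall>v\<in>insert x F. E u v \<longrightarrow> c' u \<noteq> c' v"
    proof (intro ballI impI)
      fix u v assume uv: "u \<in> insert x F" "v \<in> insert x F" "E u v"
      show "c' u \<noteq> c' v"
      proof (cases "u = x")
        case True
        then have "v \<noteq> x" using irr uv(3) by auto
        then have "v \<in> F" using uv by auto
        moreover have "v \<in> V" using inV uv(3) by auto
        ultimately have "c v \<in> ?used" using True uv(3) by auto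
        then show ?thesis using True \<open>v \<noteq> x\<close> col by (auto simp: c'_def)
      next
        case False
        then have uF: "u \<in> F" using uv by auto
        show ?thesis
        proof (cases "v = x")
          case True
          have "u \<in> V" using inV uv(3) by auto
          then have "c u \<in> ?used" using True uv(3) sym uF by auto
          then show ?thesis using True False col by (auto simp: c'_def)
        next
          case False
          then show ?thesis using \<open>u \<noteq> x\<close> uF uv c by (auto simp: c'_def)
        qed
      qed
    qed
    ultimately show ?case by blast
  qed
  from this[of V] obtain c :: "'a \<Rightarrow> nat" where c: "\<forall>v\<in>V. c v \<le> D" "\<forall>u\<in>V. \<forall>v\<in>V. E u v \<longrightarrow> c u \<noteq> c v" by auto
  then show ?thesis using inV by (intro exI[of _ c]) auto
qed

definition chi :: "('a \<Rightarrow> bool) \<Rightarrow> 'a \<Rightarrow> int" where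
  "chi \<sigma> v = (if \<sigma> v then 1 else -1)"

definition Bterm :: "'a set \<Rightarrow> ('a \<Rightarrow> 'a \<Rightarrow> bool) \<Rightarrow> ('a \<Rightarrow> nat) \<Rightarrow> 'a list \<Rightarrow> 'a \<Rightarrow> int" where
  "Bterm V E c X v = 2 * int (c v) + int ((deg V E v + traversals X v) mod 2) - int (deg V E v) - int (traversals X v)"

definition Bsum :: "'a set \<Rightarrow> ('a \<Rightarrow> 'a \<Rightarrow> bool) \<Rightarrow> ('a \<Rightarrow> bool) \<Rightarrow> ('a \<Rightarrow> nat) \<Rightarrow> 'a list \<Rightarrow> int" where
  "Bsum V E \<sigma> c X = (\<Sum>v\<in>V. chi \<sigma> v * Bterm V E c X v)"

lemma chi_cases: "chi \<sigma> v = 1 \<or> chi \<sigma> v = -1"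
  by (simp add: chi_def)

lemma chi_sq: "chi \<sigma> v * chi \<sigma> v = 1"
  by (simp add: chi_def)

lemma Bterm_alt: "Bterm V E c X v = 2 * int (c v) - 2 * int ((deg V E v + traversals X v) div 2)"
proof -
  let ?s = "deg V E v + traversals X v"
  have "?s = 2 * (?s div 2) + ?s mod 2" by simp
  then have "int ?s = 2 * int (?s div 2) + int (?s mod 2)" by (metis of_nat_add of_nat_mult of_nat_numeral)
  then show ?thesis unfolding Bterm_def by simp
qed

lemma Bterm_even: "even (Bterm V E c X v)"
  unfolding Bterm_alt by simp

lemma Bsum_even: "even (Bsum V E \<sigma> c X)"
  unfolding Bsum_def by (intro dvd_sum) (simp add: Bterm_even)

lemma Bsum_diff:
  assumes "finite V" "set X \<subseteq> V"
  shows "Bsum V E \<sigma> c X - Bsum V E \<sigma> c [r] =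
    (\<Sum>v\<in>set X. chi \<sigma> v * (int ((deg V E v + traversals X v) mod 2) - int (deg V E v mod 2) - int (traversals X v)))"
proof -
  let ?f = "\<lambda>v. chi \<sigma> v * (int ((deg V E v + traversals X v) mod 2) - int (deg V E v mod 2) - int (traversals X v))"
  have "Bsum V E \<sigma> c X - Bsum V E \<sigma> c [r] = (\<Sum>v\<in>V. ?f v)"
    unfolding Bsum_def sum_subtractf[symmetric] Bterm_def by (intro sum.cong) (auto simp: algebra_simps)
  also have "\<dots> = (\<Sum>v\<in>set X. ?f v)"
    using assms by (intro sum.mono_neutral_right) (auto simp: trav_notin)
  finally show ?thesis .
qed

lemma par1: "int ((d + 1) mod 2) - int (d mod 2) - 1 = (if even d then 0 else -2)"
  by (cases "even d") (auto simp: odd_iff_mod_2_eq_one even_iff_mod_2_eq_zero[symmetric] mod_Suc)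

lemma par2: "int ((d + 2) mod 2) - int (d mod 2) - 2 = -2"
  by simp

lemma X0_pair:
  assumes "finite V" "r \<in> V" "b \<in> V" "r \<noteq> b" "even (deg V E r) \<noteq> even (deg V E b)"
  shows "(Bsum V E \<sigma> c [r, b] - Bsum V E \<sigma> c [r]) mod 4 = 2"
proof -
  have t: "traversals [r, b] v = (if r = v \<or> b = v then 1 else 0)" for v by simp
  have "Bsum V E \<sigma> c [r, b] - Bsum V E \<sigma> c [r] =
     chi \<sigma> r * (int ((deg V E r + 1) mod 2) - int (deg V E r mod 2) - 1)
   + chi \<sigma> b * (int ((deg V E b + 1) mod 2) - int (deg V E b mod 2) - 1)"
    using assms by (subst Bsum_diff) (auto simp: t)
  also have "\<dots> = chi \<sigma> r * (if even (deg V E r) then 0 else -2) + chi \<sigma> b * (if even (deg V E b) then 0 else -2)"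
    by (simp only: par1)
  finally show ?thesis using assms(5) chi_cases[of \<sigma> r] chi_cases[of \<sigma> b] by auto
qed

lemma X0_triple:
  assumes "finite V" "r \<in> V" "y \<in> V" "x \<in> V" "r \<noteq> y" "y \<noteq> x" "x \<noteq> r" "even (deg V E r) = even (deg V E x)"
  shows "(Bsum V E \<sigma> c [r, y, x] - Bsum V E \<sigma> c [r]) mod 4 = 2"
proof -
  have t: "traversals [r, y, x] v = (if r = v \<or> y = v then 1 else 0) + (if y = v \<or> x = v then 1 else 0)" for v by simp
  have "Bsum V E \<sigma> c [r, y, x] - Bsum V E \<sigma> c [r] =
     chi \<sigma> r * (int ((deg V E r + 1) mod 2) - int (deg V E r mod 2) - 1)
   + chi \<sigma> y * (int ((deg V E y + 2) mod 2) - int (deg V E y mod 2) - 2)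
   + chi \<sigma> x * (int ((deg V E x + 1) mod 2) - int (deg V E x mod 2) - 1)"
    using assms by (subst Bsum_diff) (auto simp: t)
  also have "\<dots> = chi \<sigma> r * (if even (deg V E r) then 0 else -2) + chi \<sigma> y * (-2) + chi \<sigma> x * (if even (deg V E x) then 0 else -2)"
    by (simp only: par1 par2)
  finally show ?thesis using assms(8) chi_cases[of \<sigma> r] chi_cases[of \<sigma> y] chi_cases[of \<sigma> x] by auto
qed

lemma choose_X0:
  assumes fin: "finite V" and sym: "\<And>u v. E u v \<Longrightarrow> E v u" and irr: "\<And>v. \<not> E v v"
    and inV: "\<And>u v. E u v \<Longrightarrow> u \<in> V \<and> v \<in> V"
    and edge: "E a0 b0" and z: "z \<in> V" "z \<noteq> a0" "z \<noteq> b0"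
    and conn: "\<forall>u\<in>V. \<forall>v\<in>V. E\<^sup>*\<^sup>* u v"
  shows "\<exists>r X0. r \<in> V \<and> X0 \<noteq> [] \<and> hd X0 = r \<and> set X0 \<subseteq> V \<and> successively E X0 \<and> length X0 \<le> 3
     \<and> (\<forall>\<sigma> c. (Bsum V E \<sigma> c X0 - Bsum V E \<sigma> c [r]) mod 4 = 2)"
proof (cases "\<exists>u v. E u v \<and> even (deg V E u) \<noteq> even (deg V E v)")
  case True
  then obtain u v where uv: "E u v" "even (deg V E u) \<noteq> even (deg V E v)" by blast
  have "u \<noteq> v" using irr uv(1) by auto
  then show ?thesis using uv inV[OF uv(1)] X0_pair[OF fin, of u v]
    by (intro exI[of _ u] exI[of _ "[u, v]"]) auto
next
  case False
  then have par: "E u v \<Longrightarrow> even (deg V E u) = even (deg V E v)" for u v by blast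
  have a0V: "a0 \<in> V" "b0 \<in> V" using inV[OF edge] by auto
  have "\<exists>x. (E a0 x \<and> x \<noteq> b0) \<or> (E b0 x \<and> x \<noteq> a0)"
  proof (rule ccontr)
    assume n: "\<not> ?thesis"
    have "E\<^sup>*\<^sup>* a0 y \<Longrightarrow> y \<in> {a0, b0}" for y
      by (induction rule: rtranclp_induct) (use n in auto)
    moreover have "E\<^sup>*\<^sup>* a0 z" using conn a0V z by auto
    ultimately show False using z by auto
  qed
  then obtain x where x: "(E a0 x \<and> x \<noteq> b0) \<or> (E b0 x \<and> x \<noteq> a0)" by blast
  show ?thesis
  proof (cases "E a0 x \<and> x \<noteq> b0")
    case True
    have d: "b0 \<noteq> a0" "a0 \<noteq> x" using irr edge True by auto
    have p: "even (deg V E b0) = even (deg V E x)" using par[OF sym[OF edge]] par[of a0 x] True by simp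
    have xV: "x \<in> V" using inV True by auto
    show ?thesis using X0_triple[OF fin a0V(2) a0V(1) xV d(1) d(2) _ p] True a0V xV sym[OF edge]
      by (intro exI[of _ b0] exI[of _ "[b0, a0, x]"]) auto
  next
    case False
    then have F: "E b0 x" "x \<noteq> a0" using x by auto
    have d: "a0 \<noteq> b0" "b0 \<noteq> x" using irr edge F by auto
    have p: "even (deg V E a0) = even (deg V E x)" using par[OF edge] par[of b0 x] F by simp
    have xV: "x \<in> V" using inV F by auto
    show ?thesis using X0_triple[OF fin a0V(1) a0V(2) xV d(1) d(2) _ p] F a0V xV edge
      by (intro exI[of _ a0] exI[of _ "[a0, b0, x]"]) auto
  qed
qed

lemma last_insert: "last (xs @ u # concat (replicate a [v, u]) @ ys) = last (xs @ u # ys)"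
proof (cases "ys = []")
  case True
  have "last (u # concat (replicate a [v, u])) = u" using rep_rot[of u a v] by simp
  then show ?thesis using True by simp
qed simp

lemma walk_of: "w \<noteq> [] \<Longrightarrow> set w \<subseteq> V \<Longrightarrow> successively E w \<Longrightarrow> is_walk V E w"
  unfolding is_walk_def by (simp add: successively_conv_nth)

lemma succ_app:
  assumes "successively E w1" "successively E X" "X \<noteq> []" "last w1 = hd X" "w1 \<noteq> []"
  shows "successively E (w1 @ tl X)"
proof -
  obtain a t where X: "X = a # t" using assms(3) by (cases X) auto
  have "successively E (tl X)" "tl X \<noteq> [] \<longrightarrow> E (hd X) (hd (tl X))"
    using assms(2) unfolding X by (cases t; simp)+
  then show ?thesis using assms by (auto simp: successively_append_iff)
qed

lemma mod_half:
  fixes Q :: int and k :: nat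
  assumes "even Q" "0 < k"
  shows "2 * int (nat ((Q mod (2 * int k)) div 2)) = Q mod (2 * int k)"
    and "nat ((Q mod (2 * int k)) div 2) < k"
proof -
  obtain t where t: "Q = 2 * t" using assms(1) by blast
  have ev: "even (Q mod (2 * int k))" unfolding t by (simp add: mod_mult_mult1)
  have nn: "0 \<le> Q mod (2 * int k)" "Q mod (2 * int k) < 2 * int k" using assms(2) by auto
  show "2 * int (nat ((Q mod (2 * int k)) div 2)) = Q mod (2 * int k)" using ev nn by simp
  have "(Q mod (2 * int k)) div 2 < int k" using nn(2) by linarith
  moreover have "0 \<le> (Q mod (2 * int k)) div 2" using nn(1) by simp
  ultimately show "nat ((Q mod (2 * int k)) div 2) < k" by (simp add: nat_less_iff)
qed

lemma main_walk:
  fixes V :: "'a set" and E :: "'a \<Rightarrow> 'a \<Rightarrow> bool" and c :: "'a \<Rightarrow> nat" and k D :: nat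
  assumes fin: "finite V" and sym: "\<And>u v. E u v \<Longrightarrow> E v u" and irr: "\<And>v. \<not> E v v"
    and inV: "\<And>u v. E u v \<Longrightarrow> u \<in> V \<and> v \<in> V"
    and conn: "\<forall>u\<in>V. \<forall>v\<in>V. E\<^sup>*\<^sup>* u v"
    and edge: "E a0 b0" and z: "z \<in> V" "z \<noteq> a0" "z \<noteq> b0"
    and col: "\<forall>v\<in>V. c v < k" and proper: "\<forall>u v. E u v \<longrightarrow> c u \<noteq> c v"
    and kD: "k \<le> D + 1" and degD: "\<forall>v\<in>V. deg V E v \<le> D"
    and two: "\<forall>\<sigma>::'a\<Rightarrow>bool. (\<forall>u v. E u v \<longrightarrow> \<sigma> u \<noteq> \<sigma> v) \<longrightarrow> k \<le> 2"
  shows "\<exists>w. irregularising_walk V E w \<and> walk_length w \<le> 2*k*(card V - 1) + 2*D"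
proof -
  have ab: "a0 \<in> V" "b0 \<in> V" using inV[OF edge] by auto
  have k2: "2 \<le> k" using col ab proper edge by (metis One_nat_def Suc_1 Suc_leI less_one linorder_neqE_nat not_less0)
  have D1: "1 \<le> D"
  proof -
    have "b0 \<in> {u \<in> V. E a0 u}" using ab edge by auto
    then have "card {u \<in> V. E a0 u} \<ge> 1" using fin by (metis (no_types, lifting) One_nat_def Suc_leI card_gt_0_iff empty_iff finite_subset mem_Collect_eq subsetI)
    then show ?thesis using degD ab by (auto simp: deg_def)
  qed
  obtain r X0 where rX0: "r \<in> V" "X0 \<noteq> []" "hd X0 = r" "set X0 \<subseteq> V" "successively E X0" "length X0 \<le> 3"
     "\<forall>\<sigma> c. (Bsum V E \<sigma> c X0 - Bsum V E \<sigma> c [r]) mod 4 = 2"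
    using choose_X0[OF fin sym irr inV edge z conn] by blast
  have VG: "V \<in> grown E r" using conn_grown[OF fin rX0(1)] conn rX0(1) inV by blast
  obtain \<sigma> :: "'a \<Rightarrow> bool" where FLs: "\<forall>g::'a\<Rightarrow>nat. \<exists>w. w \<noteq> [] \<and> hd w = r \<and> last w = r \<and> set w = V \<and> successively E w
     \<and> successively (\<lambda>a b. \<sigma> a \<noteq> \<sigma> b) w \<and> length w \<le> 2*k*(card V - 1) + 1
     \<and> (\<forall>v\<in>V. v \<noteq> r \<longrightarrow> traversals w v mod (2*k) = 2*(g v mod k))"
  proof -
    have k0: "0 < k" using k2 by simp
    show ?thesis using FL[OF VG k0 sym] that by blast
  qed
  let ?\<chi> = "chi \<sigma>"
  obtain p q where pq: "E p q" "\<sigma> p = \<sigma> q \<or> k \<le> 2"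
  proof (cases "\<exists>p q. E p q \<and> \<sigma> p = \<sigma> q")
    case True
    then show ?thesis using that by blast
  next
    case False
    then have "k \<le> 2" using two by blast
    then show ?thesis using that edge by blast
  qed
  have pqV: "p \<in> V" "q \<in> V" "p \<noteq> q" using inV[OF pq(1)] irr pq(1) by auto
  have "\<exists>X m. X \<noteq> [] \<and> hd X = r \<and> set X \<subseteq> V \<and> successively E X \<and> 2 * m + (length X - 1) \<le> 2 * D
      \<and> (2 * int k) dvd (Bsum V E \<sigma> c X - 2 * int m * (?\<chi> p + ?\<chi> q))"
  proof (cases "odd k")
    case True
    then have "k \<noteq> 2" by auto
    then have k3: "3 \<le> k" using k2 by linarith
    then have "\<sigma> p = \<sigma> q" using pq(2) by auto
    then have cpq: "?\<chi> q = ?\<chi> p" by (simp add: chi_def)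
    define B where "B = Bsum V E \<sigma> c [r]"
    obtain \<beta> where \<beta>: "B = 2 * \<beta>" using Bsum_even unfolding B_def by blast
    define h where "h = (int k + 1) div 2"
    have "even (int k + 1)" using True by simp
    then have h2: "2 * h = int k + 1" unfolding h_def by (rule even_two_times_div_two)
    define mi where "mi = (?\<chi> p * \<beta> * h) mod int k"
    define t where "t = (?\<chi> p * \<beta> * h) div int k"
    have mi_eq: "mi = ?\<chi> p * \<beta> * h - int k * t" unfolding mi_def t_def by (simp add: minus_mult_div_eq_mod)
    have mi0: "0 \<le> mi" "mi < int k" using k2 unfolding mi_def by auto
    define m where "m = nat mi"
    have mm: "int m = mi" using mi0 by (simp add: m_def)
    have "mi * ?\<chi> p = \<beta> * h * (?\<chi> p * ?\<chi> p) - int k * t * ?\<chi> p" unfolding mi_eq by (simp add: algebra_simps)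
    then have mc: "mi * ?\<chi> p = \<beta> * h - int k * t * ?\<chi> p" by (simp add: chi_sq)
    have "B - 2 * int m * (?\<chi> p + ?\<chi> q) = 2 * \<beta> - 4 * (mi * ?\<chi> p)" using \<beta> mm cpq by (simp add: algebra_simps)
    also have "\<dots> = 2 * \<beta> - 2 * \<beta> * (2 * h) + 4 * int k * t * ?\<chi> p" unfolding mc by (simp add: algebra_simps)
    also have "\<dots> = (2 * int k) * (2 * t * ?\<chi> p - \<beta>)" unfolding h2 by (simp add: algebra_simps)
    finally have dv: "(2 * int k) dvd (B - 2 * int m * (?\<chi> p + ?\<chi> q))" by simp
    have "m < k" using mi0 mm by linarith
    then have "2 * m + (length [r] - 1) \<le> 2 * D" using kD by simp
    then show ?thesis using dv rX0(1) unfolding B_def by (intro exI[of _ "[r]"] exI[of _ m]) auto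
  next
    case False
    define j where "j = k div 2"
    have kj: "k = 2 * j" using False unfolding j_def by simp
    have j1: "1 \<le> j" using k2 kj by simp
    obtain X where X: "X \<noteq> []" "hd X = r" "set X \<subseteq> V" "successively E X" "length X \<le> 3"
        "4 dvd Bsum V E \<sigma> c X"
    proof (cases "4 dvd Bsum V E \<sigma> c [r]")
      case True
      then show ?thesis using that[of "[r]"] rX0(1) by auto
    next
      case False
      have e0: "even (Bsum V E \<sigma> c [r])" by (rule Bsum_even)
      have d: "(Bsum V E \<sigma> c X0 - Bsum V E \<sigma> c [r]) mod 4 = 2" using rX0(7) by blast
      have aux: "\<forall>a b::int. even a \<longrightarrow> (b - a) mod 4 = 2 \<longrightarrow> \<not> 4 dvd a \<longrightarrow> 4 dvd b" by presburger
      have "4 dvd Bsum V E \<sigma> c X0" using aux e0 d False by blast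
      then show ?thesis using that[of X0] rX0 by auto
    qed
    obtain \<gamma> where \<gamma>: "Bsum V E \<sigma> c X = 4 * \<gamma>" using X(6) by blast
    show ?thesis
    proof (cases "j = 1")
      case True
      have "2 * 0 + (length X - 1) \<le> 2 * D" using X(5) D1 by simp
      moreover have "(2 * int k) dvd (Bsum V E \<sigma> c X - 2 * int 0 * (?\<chi> p + ?\<chi> q))" using True kj X(6) by simp
      ultimately show ?thesis using X by blast
    next
      case False
      then have "\<sigma> p = \<sigma> q" using pq(2) kj j1 by auto
      then have cpq: "?\<chi> q = ?\<chi> p" by (simp add: chi_def)
      define mi where "mi = (?\<chi> p * \<gamma>) mod int j"
      define t where "t = (?\<chi> p * \<gamma>) div int j"
      have mi_eq: "mi = ?\<chi> p * \<gamma> - int j * t" unfolding mi_def t_def by (simp add: minus_mult_div_eq_mod)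
      have mi0: "0 \<le> mi" "mi < int j" using j1 unfolding mi_def by auto
      define m where "m = nat mi"
      have mm: "int m = mi" using mi0 by (simp add: m_def)
      have "mi * ?\<chi> p = \<gamma> * (?\<chi> p * ?\<chi> p) - int j * t * ?\<chi> p" unfolding mi_eq by (simp add: algebra_simps)
      then have mc: "mi * ?\<chi> p = \<gamma> - int j * t * ?\<chi> p" by (simp add: chi_sq)
      have "Bsum V E \<sigma> c X - 2 * int m * (?\<chi> p + ?\<chi> q) = 4 * \<gamma> - 4 * (mi * ?\<chi> p)" using \<gamma> mm cpq by (simp add: algebra_simps)
      also have "\<dots> = (2 * int k) * (t * ?\<chi> p)" unfolding mc kj by (simp add: algebra_simps)
      finally have dv: "(2 * int k) dvd (Bsum V E \<sigma> c X - 2 * int m * (?\<chi> p + ?\<chi> q))" by simp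
      have "m < j" using mi0 mm by linarith
      then have "2 * m + (length X - 1) \<le> 2 * D" using kD kj X(5) j1 D1 by linarith
      then show ?thesis using dv X by blast
    qed
  qed
  then obtain X m where Xm: "X \<noteq> []" "hd X = r" "set X \<subseteq> V" "successively E X" "2 * m + (length X - 1) \<le> 2 * D"
      "(2 * int k) dvd (Bsum V E \<sigma> c X - 2 * int m * (?\<chi> p + ?\<chi> q))" by blast
  have k0: "0 < k" using k2 by simp
  define Q where "Q v = Bterm V E c X v - 2 * int m * (if v = p \<or> v = q then 1 else 0)" for v
  have Qev: "even (Q v)" for v unfolding Q_def using Bterm_even[of V E c X v] by simp
  define g where "g v = nat ((Q v mod (2 * int k)) div 2)" for v
  obtain wF where wF: "wF \<noteq> []" "hd wF = r" "last wF = r" "set wF = V" "successively E wF"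
     "successively (\<lambda>a b. \<sigma> a \<noteq> \<sigma> b) wF" "length wF \<le> 2*k*(card V - 1) + 1"
     "\<forall>v\<in>V. v \<noteq> r \<longrightarrow> traversals wF v mod (2*k) = 2*(g v mod k)"
    using FLs by blast
  have Tmod: "(2 * int k) dvd (int (traversals wF v) - Q v)" if v: "v \<in> V" "v \<noteq> r" for v
  proof -
    have "traversals wF v mod (2*k) = 2 * g v" using wF(8) v mod_half(2)[OF Qev k0] by (simp add: g_def)
    then have "int (traversals wF v mod (2*k)) = int (2 * g v)" by (simp only:)
    then have "int (traversals wF v) mod (2 * int k) = int (2 * g v)" by (simp add: of_nat_mod)
    also have "\<dots> = Q v mod (2 * int k)" using mod_half(1)[OF Qev k0] by (simp add: g_def)
    finally show ?thesis by (simp add: mod_eq_dvd_iff)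
  qed
  have sum0: "(\<Sum>v\<in>V. ?\<chi> v * int (traversals wF v)) = 0"
    using alt_sum[OF fin _ wF(6)] wF(4) by (simp add: chi_def)
  have sumQ: "(\<Sum>v\<in>V. ?\<chi> v * Q v) = Bsum V E \<sigma> c X - 2 * int m * (?\<chi> p + ?\<chi> q)"
  proof -
    have "(\<Sum>v\<in>V. ?\<chi> v * Q v) = Bsum V E \<sigma> c X - (\<Sum>v\<in>V. ?\<chi> v * (2 * int m * (if v = p \<or> v = q then 1 else 0)))"
      unfolding Q_def Bsum_def by (simp only: right_diff_distrib sum_subtractf)
    also have "(\<Sum>v\<in>V. ?\<chi> v * (2 * int m * (if v = p \<or> v = q then 1 else 0)))
       = (\<Sum>v\<in>{p, q}. ?\<chi> v * (2 * int m * (if v = p \<or> v = q then 1 else 0)))"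
      using fin pqV by (intro sum.mono_neutral_right) auto
    also have "\<dots> = 2 * int m * (?\<chi> p + ?\<chi> q)" using pqV by (simp add: algebra_simps)
    finally show ?thesis .
  qed
  have allT: "(2 * int k) dvd (int (traversals wF v) - Q v)" if v: "v \<in> V" for v
  proof (cases "v = r")
    case False
    then show ?thesis using Tmod v by blast
  next
    case True
    have S: "(\<Sum>v\<in>V. ?\<chi> v * (int (traversals wF v) - Q v)) = - (Bsum V E \<sigma> c X - 2 * int m * (?\<chi> p + ?\<chi> q))"
      by (simp only: right_diff_distrib sum_subtractf sum0 sumQ diff_0)
    let ?A = "?\<chi> r * (int (traversals wF r) - Q r)"
    let ?R = "(\<Sum>v\<in>V - {r}. ?\<chi> v * (int (traversals wF v) - Q v))"
    let ?T = "(\<Sum>v\<in>V. ?\<chi> v * (int (traversals wF v) - Q v))"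
    have Ssplit: "?T = ?A + ?R"
      using fin rX0(1) by (rule sum.remove)
    have d1: "(2 * int k) dvd ?R"
      using Tmod by (intro dvd_sum) auto
    have d2: "(2 * int k) dvd ?T"
      unfolding S dvd_minus_iff using Xm(6) .
    have "?A = ?T - ?R" using Ssplit by linarith
    then have "(2 * int k) dvd ?A" using dvd_diff[OF d2 d1] by (simp only:)
    then have "(2 * int k) dvd ?\<chi> r * (?\<chi> r * (int (traversals wF r) - Q r))" by (rule dvd_mult)
    moreover have "?\<chi> r * (?\<chi> r * (int (traversals wF r) - Q r)) = int (traversals wF r) - Q r"
      by (simp only: mult.assoc[symmetric] chi_sq mult_1)
    ultimately have "(2 * int k) dvd (int (traversals wF r) - Q r)" by (simp only:)
    then show ?thesis using True by (simp only:)
  qed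
  obtain xs ys where wsplit: "wF = xs @ p # ys" using wF(4) pqV(1) by (metis split_list)
  define w1 where "w1 = xs @ p # concat (replicate m [q, p]) @ ys"
  define w where "w = w1 @ tl X"
  have w1l: "last w1 = r" unfolding w1_def using last_insert[of xs p m q ys] wF(3) wsplit by simp
  have w1n: "w1 \<noteq> []" by (simp add: w1_def)
  have trw: "traversals w v = traversals wF v + 2 * m * (if v = p \<or> v = q then 1 else 0) + traversals X v" for v
  proof -
    have "traversals w v = traversals w1 v + traversals X v" unfolding w_def
      using trav_append[OF w1n Xm(1)] w1l Xm(2) by simp
    moreover have "traversals w1 v = traversals wF v + 2 * m * (if v = p \<or> v = q then 1 else 0)"
      unfolding w1_def wsplit by (rule trav_insert[OF pqV(3)])
    ultimately show ?thesis by simp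
  qed
  have sw1: "successively E w1" unfolding w1_def using succ_insert[of E xs p ys q m] wF(5) wsplit pq(1) sym[OF pq(1)] by simp
  have sw: "successively E w" unfolding w_def using succ_app[OF sw1 Xm(4) Xm(1) _ w1n] w1l Xm(2) by simp
  have setw: "set w \<subseteq> V"
  proof -
    have "set w1 \<subseteq> V" using wF(4) pqV unfolding w1_def wsplit by (auto simp: set_replicate_conv_if split: if_splits)
    moreover have "set (tl X) \<subseteq> V" using Xm(3) by (cases X) auto
    ultimately show ?thesis unfolding w_def by auto
  qed
  have walk: "is_walk V E w" using walk_of[of w V E] sw setw w1n by (simp add: w_def)
  have len: "walk_length w \<le> 2*k*(card V - 1) + 2*D"
  proof -
    have "length (concat (replicate m [q, p])) = 2 * m" by (induction m) auto
    then have "length w1 = length wF + 2 * m" unfolding w1_def wsplit by simp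
    then have "length w = length wF + 2 * m + (length X - 1)" unfolding w_def by simp
    then show ?thesis unfolding walk_length_def using wF(7) Xm(5) wF(1) by linarith
  qed
  have key: "(deg V E v + traversals w v) mod (2 * k) = 2 * c v + (deg V E v + traversals X v) mod 2" if v: "v \<in> V" for v
  proof -
    let ?\<pi> = "(deg V E v + traversals X v) mod 2"
    have "int (deg V E v + traversals w v) - int (2 * c v + ?\<pi>) = int (traversals wF v) - Q v"
      unfolding trw Q_def Bterm_def by simp
    then have "(2 * int k) dvd (int (deg V E v + traversals w v) - int (2 * c v + ?\<pi>))" using allT[OF v] by simp
    then have "int (deg V E v + traversals w v) mod (2 * int k) = int (2 * c v + ?\<pi>) mod (2 * int k)"
      by (simp add: mod_eq_dvd_iff)
    moreover have "2 * c v + ?\<pi> < 2 * k"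
    proof -
      have "c v < k" using col v by blast
      moreover have "?\<pi> < 2" by simp
      ultimately show ?thesis by linarith
    qed
    ultimately have "int (deg V E v + traversals w v) mod (2 * int k) = int (2 * c v + ?\<pi>)" by simp
    then have "int ((deg V E v + traversals w v) mod (2 * k)) = int (2 * c v + ?\<pi>)" by (simp add: of_nat_mod)
    then show ?thesis by (simp only: of_nat_eq_iff)
  qed
  have irr_w: "irregularising_walk V E w"
    unfolding irregularising_walk_def deg_plus_walk_def
  proof (intro conjI walk allI impI)
    fix u v assume uv: "E u v"
    have uvV: "u \<in> V" "v \<in> V" using inV[OF uv] by auto
    show "deg V E u + traversals w u \<noteq> deg V E v + traversals w v"
    proof
      assume eq: "deg V E u + traversals w u = deg V E v + traversals w v"
      have "2 * c u + (deg V E u + traversals X u) mod 2 = 2 * c v + (deg V E v + traversals X v) mod 2"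
        using key[OF uvV(1)] key[OF uvV(2)] eq by simp
      then have "c u = c v" by linarith
      then show False using proper uv by blast
    qed
  qed
  show ?thesis using irr_w len by blast
qed

theorem corollary4p6:
  fixes V :: "'a set" and E :: "'a \<Rightarrow> 'a \<Rightarrow> bool" and n \<Delta> k :: nat
  assumes "simple_graph V E"
    and "nice V E"
    and "n = card V"
    and "\<Delta> = max_degree V E"
    and "k = chromatic_number V E"
  shows "(\<exists>w. irregularising_walk V E w) \<and> min_irreg_walk_length V E \<le> 2 * k * (n - 1) + 2 * \<Delta>"
proof -
  have fin: "finite V" and sym: "\<And>u v. E u v \<Longrightarrow> E v u" and irr: "\<And>v. \<not> E v v"
    and inV: "\<And>u v. E u v \<Longrightarrow> u \<in> V \<and> v \<in> V"
    using assms(1) unfolding simple_graph_def by blast+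
  have Vne: "V \<noteq> {}" and conn: "\<forall>u\<in>V. \<forall>v\<in>V. E\<^sup>*\<^sup>* u v" and nK2: "\<not> is_K2 V E"
    using assms(2) unfolding nice_def connected_graph_def by blast+
  have degD: "\<forall>v\<in>V. deg V E v \<le> \<Delta>"
    unfolding assms(4) max_degree_def using fin by auto
  obtain c0 :: "'a \<Rightarrow> nat" where c0: "(\<forall>v\<in>V. c0 v < \<Delta> + 1) \<and> (\<forall>u v. E u v \<longrightarrow> c0 u \<noteq> c0 v)"
    using greedy[OF fin degD sym irr inV] by blast
  let ?P = "\<lambda>k. \<exists>c :: 'a \<Rightarrow> nat. (\<forall>v\<in>V. c v < k) \<and> (\<forall>u v. E u v \<longrightarrow> c u \<noteq> c v)"
  have kdef: "k = (LEAST k. ?P k)" unfolding assms(5) chromatic_number_def by simp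
  have "?P k" unfolding kdef by (rule LeastI[of ?P "\<Delta> + 1"]) (use c0 in blast)
  then obtain c :: "'a \<Rightarrow> nat" where col: "\<forall>v\<in>V. c v < k" and proper: "\<forall>u v. E u v \<longrightarrow> c u \<noteq> c v" by blast
  have kD: "k \<le> \<Delta> + 1" unfolding kdef by (rule Least_le) (use c0 in blast)
  have two: "\<forall>\<sigma>::'a\<Rightarrow>bool. (\<forall>u v. E u v \<longrightarrow> \<sigma> u \<noteq> \<sigma> v) \<longrightarrow> k \<le> 2"
  proof (intro allI impI)
    fix \<sigma> :: "'a \<Rightarrow> bool" assume s: "\<forall>u v. E u v \<longrightarrow> \<sigma> u \<noteq> \<sigma> v"
    have "?P 2" using s by (intro exI[of _ "\<lambda>v. if \<sigma> v then 1 else 0"]) auto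
    then show "k \<le> 2" unfolding kdef by (rule Least_le)
  qed
  obtain w where w: "irregularising_walk V E w" "walk_length w \<le> 2 * k * (n - 1) + 2 * \<Delta>"
  proof (cases "\<exists>a b. E a b")
    case True
    then obtain a0 b0 where e: "E a0 b0" by blast
    have ab: "a0 \<in> V" "b0 \<in> V" "a0 \<noteq> b0" using inV[OF e] irr e by auto
    have "V \<noteq> {a0, b0}" using nK2 ab e unfolding is_K2_def by blast
    then obtain z where z: "z \<in> V" "z \<noteq> a0" "z \<noteq> b0" using ab by blast
    show ?thesis using main_walk[OF fin sym irr inV conn e z col proper kD degD two] that assms(3) by blast
  next
    case False
    obtain r where r: "r \<in> V" using Vne by blast
    have "is_walk V E [r]" using r by (simp add: is_walk_def)
    then have "irregularising_walk V E [r]" using False by (simp add: irregularising_walk_def)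
    moreover have "walk_length [r] = 0" by (simp add: walk_length_def)
    ultimately show ?thesis using that by simp
  qed
  have "min_irreg_walk_length V E \<le> walk_length w"
    unfolding min_irreg_walk_length_def by (rule Least_le) (use w in blast)
  then show ?thesis using w by auto
qed

end
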